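(* Let $\mu_0$ and $\mu_1$ be probabilistic frames on $\mathbb{R}^d$ that are absolutely continuous with respect to Lebesgue measure, and suppose there is a linear map $r(x)=Ax$, with $A\in\mathbb{R}^{d\times d}$ positive semi-definite, such that $r_\#\mu_0=\mu_1$ and $r$ minimizes the 2-Wasserstein transport cost, i.e. $\int\|x-r(x)\|^2d\mu_0(x)=W_2^2(\mu_0,\mu_1)$. Then every measure $\mu_t=(h_t)_\#\mu_0$, $h_t(x)=(1-t)x+tr(x)$, $t\in[0,1]$, on the geodesic between $\mu_0$ and $\mu_1$ has support which spans $\mathbb{R}^d$, and is therefore a probabilistic frame.
   Context: A probabilistic frame is a probability measure on $\mathbb{R}^d$ with finite second moment whose support spans $\mathbb{R}^d$. $W_2^2(\mu_0,\mu_1)=\inf_\gamma\iint\|x-y\|^2d\gamma(x,y)$ over couplings $\gamma$ of $\mu_0,\mu_1$. $T_\#\mu$ denotes the pushforward of $\mu$ by $T$. *)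

theory Defs
  imports "HOL-Probability.Probability"
begin

definition msupport :: "'a::topological_space measure \<Rightarrow> 'a set" where
  "msupport M = {x. \<forall>U. open U \<longrightarrow> x \<in> U \<longrightarrow> emeasure M U > 0}"

definition prob_frame :: "'a::euclidean_space measure \<Rightarrow> bool" where
  "prob_frame M \<longleftrightarrow> prob_space M \<and> sets M = sets borel
     \<and> (\<integral>\<^sup>+ x. ennreal ((norm x)\<^sup>2) \<partial>M) < \<infinity>
     \<and> span (msupport M) = UNIV"

definition couplings :: "'a::euclidean_space measure \<Rightarrow> 'a measure \<Rightarrow> ('a \<times> 'a) measure set" where
  "couplings M N = {G. prob_space G \<and> sets G = sets borel
       \<and> distr G borel fst = M \<and> distr G borel snd = N}"

definition W2sq :: "'a::euclidean_space measure \<Rightarrow> 'a measure \<Rightarrow> ennreal" where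
  "W2sq M N = (INF G \<in> couplings M N. \<integral>\<^sup>+ p. ennreal ((norm (fst p - snd p))\<^sup>2) \<partial>G)"

end

theory Submission
  imports Defs
begin

lemma frame_push:
  fixes M :: "'a::euclidean_space measure" and f :: "'a \<Rightarrow> 'a"
  assumes fr: "prob_frame M" and lin: "linear f" and su: "surj f"
  shows "span (msupport (distr M borel f)) = UNIV \<and> prob_frame (distr M borel f)"
proof -
  have ps: "prob_space M" and sM: "sets M = sets borel"
    and mom: "(\<integral>\<^sup>+ x. ennreal ((norm x)\<^sup>2) \<partial>M) < \<infinity>" and spn: "span (msupport M) = UNIV"
    using fr unfolding prob_frame_def by auto
  have sp: "space M = UNIV" using sets_eq_imp_space_eq[OF sM] by simp
  have cont: "continuous_on UNIV f" using lin by (simp add: linear_continuous_on linear_linear)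
  have mb: "f \<in> borel_measurable borel" by (rule borel_measurable_continuous_onI[OF cont])
  have meas: "f \<in> borel_measurable M" unfolding measurable_cong_sets[OF sM refl, of borel] by (rule mb)
  have sub: "f ` msupport M \<subseteq> msupport (distr M borel f)"
  proof
    fix y assume "y \<in> f ` msupport M"
    then obtain x where x: "x \<in> msupport M" "y = f x" by auto
    show "y \<in> msupport (distr M borel f)"
      unfolding msupport_def
    proof (intro CollectI allI impI)
      fix U :: "'a set" assume U: "open U" "y \<in> U"
      have "open (f -` U)" using cont U(1) by (simp add: continuous_on_open_vimage)
      moreover have "x \<in> f -` U" using U x by simp
      moreover have "\<forall>V. open V \<longrightarrow> x \<in> V \<longrightarrow> emeasure M V > 0" using x(1) by (simp add: msupport_def)
      ultimately have "emeasure M (f -` U) > 0" by simp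
      moreover have "emeasure (distr M borel f) U = emeasure M (f -` U \<inter> space M)"
        using U(1) meas by (simp add: emeasure_distr)
      ultimately show "emeasure (distr M borel f) U > 0" using sp by simp
    qed
  qed
  have "UNIV = f ` span (msupport M)" using su spn by simp
  also have "\<dots> = span (f ` msupport M)" using lin by (simp add: span_linear_image)
  also have "\<dots> \<subseteq> span (msupport (distr M borel f))" using sub by (rule span_mono)
  finally have S: "span (msupport (distr M borel f)) = UNIV" by (simp add: top.extremum_unique)
  obtain B where B: "B > 0" "\<And>x. norm (f x) \<le> B * norm x"
    using linear_bounded_pos[OF lin] by blast
  have "(\<integral>\<^sup>+ x. ennreal ((norm x)\<^sup>2) \<partial>distr M borel f) = (\<integral>\<^sup>+ x. ennreal ((norm (f x))\<^sup>2) \<partial>M)"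
    using meas by (simp add: nn_integral_distr)
  also have "\<dots> \<le> (\<integral>\<^sup>+ x. ennreal (B\<^sup>2) * ennreal ((norm x)\<^sup>2) \<partial>M)"
  proof (rule nn_integral_mono)
    fix x
    have "(norm (f x))\<^sup>2 \<le> (B * norm x)\<^sup>2" by (rule power_mono[OF B(2)]) simp
    also have "\<dots> = B\<^sup>2 * (norm x)\<^sup>2" by (rule power_mult_distrib)
    finally have "ennreal ((norm (f x))\<^sup>2) \<le> ennreal (B\<^sup>2 * (norm x)\<^sup>2)" by (rule ennreal_leI)
    also have "\<dots> = ennreal (B\<^sup>2) * ennreal ((norm x)\<^sup>2)" by (rule ennreal_mult) simp_all
    finally show "ennreal ((norm (f x))\<^sup>2) \<le> ennreal (B\<^sup>2) * ennreal ((norm x)\<^sup>2)" .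
  qed
  also have "\<dots> = ennreal (B\<^sup>2) * (\<integral>\<^sup>+ x. ennreal ((norm x)\<^sup>2) \<partial>M)"
  proof (rule nn_integral_cmult)
    have "(\<lambda>x::'a. (norm x)\<^sup>2) \<in> borel_measurable borel"
      by (intro borel_measurable_continuous_onI continuous_intros)
    then show "(\<lambda>x::'a. ennreal ((norm x)\<^sup>2)) \<in> borel_measurable M"
      unfolding measurable_cong_sets[OF sM refl, of borel] by simp
  qed
  also have "\<dots> < \<infinity>" using mom by (simp add: ennreal_mult_less_top)
  finally have mom2: "(\<integral>\<^sup>+ x. ennreal ((norm x)\<^sup>2) \<partial>distr M borel f) < \<infinity>" .
  have "prob_space (distr M borel f)"
    using ps meas by (rule prob_space.prob_space_distr)
  moreover have "sets (distr M borel f) = sets borel" by simp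
  ultimately show ?thesis using S mom2 unfolding prob_frame_def by blast
qed

theorem mainTheorem11:
  fixes \<mu>0 \<mu>1 :: "(real ^ 'n) measure" and A :: "real ^ 'n ^ 'n"
  assumes "prob_frame \<mu>0" and "prob_frame \<mu>1"
    and "absolutely_continuous lborel \<mu>0" and "absolutely_continuous lborel \<mu>1"
    and "transpose A = A" and "\<forall>x. x \<bullet> (A *v x) \<ge> 0"
    and "distr \<mu>0 borel (\<lambda>x. A *v x) = \<mu>1"
    and "(\<integral>\<^sup>+ x. ennreal ((norm (x - A *v x))\<^sup>2) \<partial>\<mu>0) = W2sq \<mu>0 \<mu>1"
  shows "\<forall>t\<in>{0..1::real}.
           span (msupport (distr \<mu>0 borel (\<lambda>x. (1 - t) *\<^sub>R x + t *\<^sub>R (A *v x)))) = UNIV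
         \<and> prob_frame (distr \<mu>0 borel (\<lambda>x. (1 - t) *\<^sub>R x + t *\<^sub>R (A *v x)))"
proof
  fix t :: real assume t: "t \<in> {0..1}"
  let ?f = "\<lambda>x. (1 - t) *\<^sub>R x + t *\<^sub>R (A *v x)"
  have lin: "linear ?f"
    by (rule linearI) (simp_all add: algebra_simps)
  show "span (msupport (distr \<mu>0 borel ?f)) = UNIV \<and> prob_frame (distr \<mu>0 borel ?f)"
  proof (cases "t = 1")
    case True
    then have "distr \<mu>0 borel ?f = \<mu>1" using assms(7) by simp
    then show ?thesis using assms(2) unfolding prob_frame_def by simp
  next
    case False
    with t have t1: "t < 1" and t0: "0 \<le> t" by auto
    have "inj ?f"
    proof (rule linear_injective_0[OF lin, THEN iffD2], intro allI impI)
      fix x :: "real ^ 'n" assume h: "?f x = 0"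
      have "0 = x \<bullet> ?f x" using h by simp
      also have "\<dots> = (1 - t) * (x \<bullet> x) + t * (x \<bullet> (A *v x))"
        by (simp add: inner_add_right)
      moreover have "t * (x \<bullet> (A *v x)) \<ge> 0"
        using assms(6) t0 by (simp add: mult_nonneg_nonneg)
      ultimately have "(1 - t) * (x \<bullet> x) \<le> 0" by linarith
      then have "x \<bullet> x \<le> 0" using t1 by (simp add: mult_le_0_iff)
      then show "x = 0" by (metis inner_eq_zero_iff inner_ge_zero order_antisym)
    qed
    then have "surj ?f" using lin linear_injective_imp_surjective by blast
    then show ?thesis using frame_push[OF assms(1) lin] by blast
  qed
qed

end
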